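(* Let $n$ be an even positive integer, $p\ne 2$ a prime dividing $n$, and $p^a$ the largest power of $p$ dividing $n$. Suppose there is a prime $q$ with $n/3<q<n/2$ and $n-2q<p^a$. Then $n$ satisfies the 3-variation of Condition 1 with $p$, $q$ and any prime that divides $\binom{n}{n/2}$.
   Context: A positive integer $n$ satisfies the $N$-variation of Condition 1 with primes $p_1,\dots,p_N$ if these are $N$ different primes and for every $1\le k\le n-1$, $\binom{n}{k}$ is divisible by at least one of $p_1,\dots,p_N$. *)

theory Defs
  imports "HOL-Computational_Algebra.Primes" Complex_Main
begin

definition cond1_var :: "nat \<Rightarrow> nat \<Rightarrow> nat set \<Rightarrow> bool" where
  "cond1_var N n P \<longleftrightarrow> finite P \<and> card P = N \<and> (\<forall>p\<in>P. prime p) \<and>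
     (\<forall>k. 1 \<le> k \<and> k \<le> n - 1 \<longrightarrow> (\<exists>p\<in>P. p dvd (n choose k)))"

end

theory Submission
  imports Defs
begin

lemma q_part:
  fixes n k q :: nat
  assumes "prime q" "k < q" "n - k < 2 * q" "2 * q \<le> n" "k \<le> n"
  shows "q dvd (n choose k)"
proof -
  have f: "fact k * fact (n-k) * (n choose k) = (fact n :: nat)"
    using binomial_fact_lemma[OF assms(5)] by simp
  have d: "fact n div fact (n-k) = (\<Prod>{n - k + 1..n} :: nat)"
    using fact_div_fact[of "n-k" n] by simp
  have f2: "fact n = fact (n-k) * (fact k * (n choose k) :: nat)"
    using f by (simp add: ac_simps)
  have "fact n div fact (n-k) = fact k * (n choose k)"
    unfolding f2 by simp
  hence e: "fact k * (n choose k) = (\<Prod>{n - k + 1..n} :: nat)" using d by simp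
  have "2*q \<in> {n - k + 1..n}" using assms by auto
  hence "2*q dvd (\<Prod>{n - k + 1..n} :: nat)" by (intro dvd_prodI) auto
  moreover have "q dvd 2*q" by simp
  ultimately have "q dvd fact k * (n choose k)" unfolding e using dvd_trans by blast
  hence "q dvd fact k \<or> q dvd (n choose k)" using assms(1) prime_dvd_mult_iff by blast
  moreover have "\<not> q dvd fact k" using assms(1,2) prime_dvd_fact_iff by auto
  ultimately show ?thesis by blast
qed

lemma p_part:
  fixes n k p a :: nat
  assumes "prime p" "p ^ a dvd n" "\<not> p ^ a dvd k" "1 \<le> k"
  shows "p dvd (n choose k)"
proof (rule ccontr)
  assume np: "\<not> p dvd (n choose k)"
  obtain j where j: "k = Suc j" using assms(4) by (cases k) auto
  have "k * (n choose k) = n * ((n - 1) choose j)"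
    using binomial_absorption[of j n] j by simp
  hence "n dvd k * (n choose k)" by simp
  hence "p ^ a dvd k * (n choose k)" using assms(2) dvd_trans by blast
  moreover have "coprime (p ^ a) (n choose k)"
    using np assms(1) by (simp add: prime_imp_coprime)
  ultimately have "p ^ a dvd k" using coprime_dvd_mult_left_iff by blast
  thus False using assms(3) by blast
qed

theorem mainTheorem12:
  fixes n p a q r :: nat
  assumes "n > 0" and "even n"
    and "prime p" and "p \<noteq> 2" and "p dvd n"
    and "p ^ a dvd n" and "\<not> p ^ (a + 1) dvd n"
    and "prime q" and "real n / 3 < real q" and "real q < real n / 2"
    and "n - 2 * q < p ^ a"
    and "prime r" and "r dvd (n choose (n div 2))" and "r \<noteq> p" and "r \<noteq> q"
  shows "cond1_var 3 n {p, q, r}"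
proof -
  have q3: "n < 3 * q" and q2: "2 * q < n" using assms(9,10) by linarith+
  have pq: "p \<noteq> q"
  proof
    assume "p = q"
    then obtain m where m: "n = q * m" using assms(5) by blast
    have qp: "q > 0" using assms(8) prime_gt_0_nat by blast
    have "q * 2 < q * m" using q2 m by (simp add: mult.commute)
    hence "2 < m" using qp by simp
    moreover have "q * m < q * 3" using q3 m by (simp add: mult.commute)
    hence "m < 3" using qp by simp
    ultimately show False by simp
  qed
  have card: "card {p, q, r} = 3" using pq assms(14,15) by simp
  have key: "\<exists>s\<in>{p,q,r}. s dvd (n choose k)" if k: "1 \<le> k" "2 * k < n" for k
  proof (cases "p ^ a dvd k")
    case False
    thus ?thesis using p_part[OF assms(3,6) False k(1)] by blast
  next
    case True
    have "p ^ a dvd n - 2 * k" using True assms(6) by (simp add: dvd_diff_nat)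
    hence "p ^ a \<le> n - 2 * k" using k by (intro dvd_imp_le) auto
    hence a1: "k < q" using assms(11) by linarith
    have "p ^ a \<le> k" using True k by (intro dvd_imp_le) auto
    hence "n - k < 2 * q" using assms(11) q2 prime_gt_0_nat[OF assms(8)] by linarith
    thus ?thesis using q_part[OF assms(8) a1 _ _] q2 k by auto
  qed
  have "\<exists>s\<in>{p,q,r}. s dvd (n choose k)" if k: "1 \<le> k" "k \<le> n - 1" for k
  proof -
    consider "2 * k < n" | "2 * k = n" | "2 * k > n" by linarith
    thus ?thesis
    proof cases
      case 1 thus ?thesis using key k by blast
    next
      case 2 hence "k = n div 2" by simp
      thus ?thesis using assms(13) by blast
    next
      case 3
      have "\<exists>s\<in>{p,q,r}. s dvd (n choose (n - k))" using key[of "n-k"] 3 k by auto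
      moreover have "n choose (n - k) = n choose k" using k by (intro binomial_symmetric[symmetric]) auto
      ultimately show ?thesis by simp
    qed
  qed
  hence all: "\<forall>k. 1 \<le> k \<and> k \<le> n - 1 \<longrightarrow> (\<exists>s\<in>{p,q,r}. s dvd (n choose k))" by blast
  have pr: "\<forall>s\<in>{p,q,r}. prime s" using assms(3,8,12) by simp
  have fin: "finite {p,q,r}" by simp
  show ?thesis unfolding cond1_var_def using card all pr fin by blast
qed

end
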